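(* Let $X$ be a compact locale with frame presentation $\mathcal{O}X=\langle G\mid R\rangle$ and quotient frame homomorphism $\overline{q}\colon\mathcal{O}(\Sigma^G)\to\mathcal{O}X$. Let $m\in\mathcal{O}(\Sigma^G)$ be a machine, $m=\bigvee_{i\in I}\bigwedge_{j\in J_i}g_j$ with each $J_i$ a finite set of generators. Then $\overline{q}(m)=1$ in $\mathcal{O}X$ (i.e. $m$ halts on all of $X$) if and only if there exists a finite set $S$ of finite subsets of $G$ such that $\bigvee_{F\in S}\bigwedge_{g\in F}g=1$ in $\mathcal{O}X$ and $m\in{\boxtimes}F$ for every $F\in S$. (Equivalently, the procedure which in parallel searches over all finite sets $S$ of finite subsets of $G$, and for each $S$ with $\bigvee_{F\in S}\bigwedge F=1$ in $\mathcal{O}X$ tests $m\in{\boxtimes}F$ for all $F\in S$ and halts if all tests succeed, halts on $m$ exactly when $m$ covers $X$.)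
   Context: Frames are complete lattices with finite meets distributing over arbitrary joins; a locale $X$ is a frame $\mathcal{O}X$. A locale is compact if whenever $\bigvee_{i\in I}u_i=1$ there is a finite $F\subseteq I$ with $\bigvee_{i\in F}u_i=1$. For a set $G$, $\mathcal{O}(\Sigma^G)$ is the free frame on $G$; its elements ("machines") are formal joins $\bigvee_{i\in I}\bigwedge_{j\in J_i}g_j$ of finite formal meets of generators. A presentation $\mathcal{O}X=\langle G\mid R\rangle$ means $\mathcal{O}X$ is the quotient of the free frame on $G$ by the frame congruence generated by $R$, with quotient map $\overline{q}$. For $U\subseteq G$, ${\boxtimes}U$ is the Scott-open set of machines $m$ such that $m$ has a branch all of whose generators lie in $U$; i.e. $m\in{\boxtimes}U$ iff there is a finite $J\subseteq U$ with $\bigwedge_{g\in J}g\le m$ in $\mathcal{O}(\Sigma^G)$. *)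

theory Defs
  imports Main
begin

text \<open>A frame: a complete lattice in which binary meets distribute over arbitrary joins.
  A locale X is represented by its frame of opens, a type 'a of class complete_lattice
  satisfying this law.\<close>
definition is_frame :: "'a::complete_lattice itself \<Rightarrow> bool" where
  "is_frame _ \<longleftrightarrow> (\<forall>(a::'a) U. inf a (Sup U) = Sup ((\<lambda>u. inf a u) ` U))"

definition compact_frame :: "'a::complete_lattice itself \<Rightarrow> bool" where
  "compact_frame _ \<longleftrightarrow>
     (\<forall>U::'a set. Sup U = top \<longrightarrow> (\<exists>F\<subseteq>U. finite F \<and> Sup F = top))"

text \<open>Concrete model: a machine (formal join of finite formal meets of generators) is
  represented by the upward-closed family of finite sets of generators F whose formal meet
  lies below it. Order is inclusion, joins are unions, finite meets are intersections.\<close>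
definition machines :: "'g set set set" where
  "machines = {M. (\<forall>F\<in>M. finite F) \<and>
                  (\<forall>F F'. F \<in> M \<longrightarrow> F \<subseteq> F' \<longrightarrow> finite F' \<longrightarrow> F' \<in> M)}"

definition fmeet :: "'g set \<Rightarrow> 'g set set" where
  "fmeet J = {F. finite F \<and> J \<subseteq> F}"

definition gen :: "'g \<Rightarrow> 'g set set" where
  "gen g = fmeet {g}"

definition mtop :: "'g set set" where
  "mtop = {F. finite F}"

definition boxtimes :: "'g set \<Rightarrow> 'g set set set" where
  "boxtimes U = {m \<in> machines. \<exists>J. finite J \<and> J \<subseteq> U \<and> fmeet J \<subseteq> m}"

definition free_frame_hom :: "('g set set \<Rightarrow> 'a::complete_lattice) \<Rightarrow> bool" where
  "free_frame_hom q \<longleftrightarrow>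
     q mtop = top \<and>
     (\<forall>a\<in>machines. \<forall>b\<in>machines. q (a \<inter> b) = inf (q a) (q b)) \<and>
     (\<forall>A\<subseteq>machines. q (\<Union>A) = Sup (q ` A))"

definition frame_congruence :: "('g set set \<times> 'g set set) set \<Rightarrow> bool" where
  "frame_congruence E \<longleftrightarrow>
     E \<subseteq> machines \<times> machines \<and>
     (\<forall>a\<in>machines. (a, a) \<in> E) \<and> sym E \<and> trans E \<and>
     (\<forall>a b c d. (a, b) \<in> E \<longrightarrow> (c, d) \<in> E \<longrightarrow> (a \<inter> c, b \<inter> d) \<in> E) \<and>
     (\<forall>P\<subseteq>E. (\<Union>(fst ` P), \<Union>(snd ` P)) \<in> E)"

definition congruence_generated :: "('g set set \<times> 'g set set) set \<Rightarrow> ('g set set \<times> 'g set set) set" where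
  "congruence_generated R = \<Inter>{E. frame_congruence E \<and> R \<subseteq> E}"

definition is_presentation ::
  "('g set set \<times> 'g set set) set \<Rightarrow> ('g set set \<Rightarrow> 'a::complete_lattice) \<Rightarrow> bool" where
  "is_presentation R q \<longleftrightarrow>
     R \<subseteq> machines \<times> machines \<and>
     free_frame_hom q \<and>
     q ` machines = UNIV \<and>
     {(a, b). a \<in> machines \<and> b \<in> machines \<and> q a = q b} = congruence_generated R"

end

theory Submission
  imports Defs
begin

lemma fmeet_mach: "finite J \<Longrightarrow> fmeet J \<in> machines"
  unfolding fmeet_def machines_def by auto

lemma hom_mono:
  assumes h: "free_frame_hom q" and a: "a \<in> machines" and b: "b \<in> machines" and s: "a \<subseteq> b"
  shows "q a \<le> q b"
proof -
  have all: "\<forall>A\<subseteq>machines. q (\<Union>A) = Sup (q ` A)" using h by (simp add: free_frame_hom_def)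
  have ab: "{a,b} \<subseteq> machines" using a b by simp
  have "q (\<Union>{a,b}) = Sup (q ` {a,b})" using all ab by blast
  moreover have "\<Union>{a,b} = b" using s by auto
  ultimately have "q b = sup (q a) (q b)" by simp
  thus ?thesis by (simp add: le_iff_sup)
qed

lemma hom_fmeet:
  fixes q :: "'g set set \<Rightarrow> 'a::complete_lattice"
  assumes h: "free_frame_hom q" and f: "finite F"
  shows "q (fmeet F) = (INF g\<in>F. q (gen g))"
  using f
proof (induction F rule: finite_induct)
  case empty
  have "fmeet ({}::'g set) = (mtop::'g set set)" unfolding fmeet_def mtop_def by auto
  moreover have "q mtop = top" using h unfolding free_frame_hom_def by blast
  ultimately show ?case by simp
next
  case (insert x F)
  have e: "fmeet (insert x F) = gen x \<inter> fmeet F" unfolding fmeet_def gen_def by auto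
  have "gen x \<in> machines" unfolding gen_def by (rule fmeet_mach) simp
  moreover have "fmeet F \<in> machines" using insert by (simp add: fmeet_mach)
  ultimately have "q (gen x \<inter> fmeet F) = inf (q (gen x)) (q (fmeet F))"
    using h unfolding free_frame_hom_def by blast
  then show ?case using e insert by simp
qed

lemma up_closed: "m \<in> machines \<Longrightarrow> F \<in> m \<Longrightarrow> fmeet F \<subseteq> m"
proof
  fix G assume "m \<in> machines" "F \<in> m" "G \<in> fmeet F"
  then show "G \<in> m" unfolding machines_def fmeet_def by auto
qed

lemma box_iff:
  assumes m: "m \<in> machines" and f: "finite F"
  shows "m \<in> boxtimes F \<longleftrightarrow> F \<in> m"
proof
  assume "m \<in> boxtimes F"
  then obtain J where J: "finite J" "J \<subseteq> F" "fmeet J \<subseteq> m" unfolding boxtimes_def by auto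
  have "F \<in> fmeet J" using J f unfolding fmeet_def by simp
  then show "F \<in> m" using J(3) by blast
next
  assume "F \<in> m"
  then have "fmeet F \<subseteq> m" using m by (rule up_closed[rotated])
  then show "m \<in> boxtimes F" using m f unfolding boxtimes_def by auto
qed

lemma mach_union:
  assumes m: "m \<in> machines" shows "m = \<Union>(fmeet ` m)"
proof
  show "m \<subseteq> \<Union>(fmeet ` m)"
  proof
    fix F assume F: "F \<in> m"
    then have "finite F" using m unfolding machines_def by auto
    then have "F \<in> fmeet F" unfolding fmeet_def by simp
    then show "F \<in> \<Union>(fmeet ` m)" using F by blast
  qed
next
  show "\<Union>(fmeet ` m) \<subseteq> m" using up_closed[OF m] by blast
qed

theorem theorem4p1:
  fixes R :: "('g set set \<times> 'g set set) set"
    and q :: "'g set set \<Rightarrow> 'a::complete_lattice"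
    and m :: "'g set set"
  assumes "is_frame TYPE('a)"
    and "compact_frame TYPE('a)"
    and "is_presentation R q"
    and "m \<in> machines"
  shows "q m = top \<longleftrightarrow>
    (\<exists>S :: 'g set set. finite S \<and> (\<forall>F\<in>S. finite F) \<and>
        (SUP F\<in>S. INF g\<in>F. q (gen g)) = top \<and>
        (\<forall>F\<in>S. m \<in> boxtimes F))"
proof
  have h: "free_frame_hom q" using assms(3) by (simp add: is_presentation_def)
  have fin: "\<And>F. F \<in> m \<Longrightarrow> finite F" using assms(4) unfolding machines_def by blast
  have fm: "fmeet ` m \<subseteq> machines" using fin fmeet_mach by blast
  assume top: "q m = top"
  have "q (\<Union>(fmeet ` m)) = Sup (q ` fmeet ` m)"
    using h fm unfolding free_frame_hom_def by blast
  then have "q m = Sup (q ` fmeet ` m)" using mach_union[OF assms(4)] by simp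
  then have "Sup ((\<lambda>F. q (fmeet F)) ` m) = top" using top by (simp add: image_image)
  then obtain U where U: "U \<subseteq> (\<lambda>F. q (fmeet F)) ` m" "finite U" "Sup U = top"
  proof -
    have "\<forall>U::'a set. Sup U = top \<longrightarrow> (\<exists>F\<subseteq>U. finite F \<and> Sup F = top)"
      using assms(2) by (simp add: compact_frame_def)
    then have "\<exists>F\<subseteq>(\<lambda>F. q (fmeet F)) ` m. finite F \<and> Sup F = top"
      using \<open>Sup ((\<lambda>F. q (fmeet F)) ` m) = top\<close> by blast
    then show ?thesis using that by blast
  qed
  then obtain S where S: "S \<subseteq> m" "finite S" "U = (\<lambda>F. q (fmeet F)) ` S"
    using finite_subset_image[OF U(2) U(1)] by blast
  have eq: "\<And>F. F \<in> S \<Longrightarrow> (INF g\<in>F. q (gen g)) = q (fmeet F)"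
    using S(1) fin hom_fmeet[OF h] by (metis subsetD)
  have "(SUP F\<in>S. INF g\<in>F. q (gen g)) = (SUP F\<in>S. q (fmeet F))"
    using eq by (rule SUP_cong[OF refl])
  also have "\<dots> = Sup U" using S(3) by simp
  also have "\<dots> = top" using U(3) by simp
  finally have T: "(SUP F\<in>S. INF g\<in>F. q (gen g)) = top" .
  have B: "\<forall>F\<in>S. m \<in> boxtimes F" using S(1) fin box_iff[OF assms(4)] by blast
  have C: "\<forall>F\<in>S. finite F" using S(1) fin by blast
  show "\<exists>S :: 'g set set. finite S \<and> (\<forall>F\<in>S. finite F) \<and>
        (SUP F\<in>S. INF g\<in>F. q (gen g)) = top \<and> (\<forall>F\<in>S. m \<in> boxtimes F)"
    using S(2) C T B by blast
next
  have h: "free_frame_hom q" using assms(3) by (simp add: is_presentation_def)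
  assume "\<exists>S :: 'g set set. finite S \<and> (\<forall>F\<in>S. finite F) \<and>
        (SUP F\<in>S. INF g\<in>F. q (gen g)) = top \<and> (\<forall>F\<in>S. m \<in> boxtimes F)"
  then obtain S :: "'g set set" where S: "finite S" "\<forall>F\<in>S. finite F"
    "(SUP F\<in>S. INF g\<in>F. q (gen g)) = top" "\<forall>F\<in>S. m \<in> boxtimes F" by blast
  have "\<forall>F\<in>S. (INF g\<in>F. q (gen g)) \<le> q m"
  proof
    fix F assume F: "F \<in> S"
    have "F \<in> m" using F S box_iff[OF assms(4)] by blast
    then have "fmeet F \<subseteq> m" using assms(4) unfolding machines_def fmeet_def by auto
    then have "q (fmeet F) \<le> q m" using hom_mono[OF h fmeet_mach assms(4)] F S by blast
    then show "(INF g\<in>F. q (gen g)) \<le> q m" using hom_fmeet[OF h] F S by simp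
  qed
  then have "(SUP F\<in>S. INF g\<in>F. q (gen g)) \<le> q m" by (simp add: SUP_least)
  then have "top \<le> q m" using S(3) by simp
  then show "q m = top" by (simp add: top_le)
qed

end
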